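(* For $n\ge 6$, the family $$\mathcal{B}=\{\sigma\in S_n:\sigma(1)=1,\ \sigma(2)=2,\ \#\{i\ge5:\sigma(i)=i\}\neq1\}\cup\{(1\,3)(2\,4),(1\,4)(2\,3),(1\,3\,2\,4),(1\,4\,2\,3)\}$$ has no singleton intersection, is not contained in any $2$-coset of $S_n$, and satisfies $$|\mathcal{B}|=(n-2)!-(n-4)(d_{n-3}+2d_{n-4}+d_{n-5})+4=(1-1/e+o(1))(n-2)!.$$
   Context: $d_m$ denotes the number of derangements of an $m$-element set. A family $\mathcal{A}\subset S_n$ has no singleton intersection if there are no $\sigma,\tau\in\mathcal{A}$ with $\#\{i:\sigma(i)=\tau(i)\}=1$. A $2$-coset of $S_n$ is a set $\{\sigma:\sigma(i)=j,\sigma(k)=l\}$ with $i\ne k$, $j\ne l$. *)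

theory Defs
  imports "HOL-Analysis.Analysis" "HOL-Combinatorics.Permutations"
begin

definition Sym :: "nat \<Rightarrow> (nat \<Rightarrow> nat) set" where
  "Sym n = {\<sigma>. \<sigma> permutes {1..n}}"

definition derangements_num :: "nat \<Rightarrow> nat" where
  "derangements_num m = card {\<sigma>. \<sigma> permutes {1..m} \<and> (\<forall>i\<in>{1..m}. \<sigma> i \<noteq> i)}"

definition agree_count :: "nat \<Rightarrow> (nat \<Rightarrow> nat) \<Rightarrow> (nat \<Rightarrow> nat) \<Rightarrow> nat" where
  "agree_count n \<sigma> \<tau> = card {i\<in>{1..n}. \<sigma> i = \<tau> i}"

definition no_singleton_intersection :: "nat \<Rightarrow> (nat \<Rightarrow> nat) set \<Rightarrow> bool" where
  "no_singleton_intersection n A \<longleftrightarrow> (\<forall>\<sigma>\<in>A. \<forall>\<tau>\<in>A. agree_count n \<sigma> \<tau> \<noteq> 1)"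

definition two_coset :: "nat \<Rightarrow> nat \<Rightarrow> nat \<Rightarrow> nat \<Rightarrow> nat \<Rightarrow> (nat \<Rightarrow> nat) set" where
  "two_coset n i j k l = {\<sigma>\<in>Sym n. \<sigma> i = j \<and> \<sigma> k = l}"

definition is_two_coset :: "nat \<Rightarrow> (nat \<Rightarrow> nat) set \<Rightarrow> bool" where
  "is_two_coset n C \<longleftrightarrow> (\<exists>i\<in>{1..n}. \<exists>j\<in>{1..n}. \<exists>k\<in>{1..n}. \<exists>l\<in>{1..n}.
      i \<noteq> k \<and> j \<noteq> l \<and> C = two_coset n i j k l)"

definition p1324 :: "nat \<Rightarrow> nat" where
  "p1324 i = (if i = 1 then 3 else if i = 3 then 1 else if i = 2 then 4 else if i = 4 then 2 else i)"
definition p1423 :: "nat \<Rightarrow> nat" where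
  "p1423 i = (if i = 1 then 4 else if i = 4 then 1 else if i = 2 then 3 else if i = 3 then 2 else i)"
definition c1324 :: "nat \<Rightarrow> nat" where
  "c1324 i = (if i = 1 then 3 else if i = 3 then 2 else if i = 2 then 4 else if i = 4 then 1 else i)"
definition c1423 :: "nat \<Rightarrow> nat" where
  "c1423 i = (if i = 1 then 4 else if i = 4 then 2 else if i = 2 then 3 else if i = 3 then 1 else i)"

definition familyB :: "nat \<Rightarrow> (nat \<Rightarrow> nat) set" where
  "familyB n = {\<sigma>\<in>Sym n. \<sigma> 1 = 1 \<and> \<sigma> 2 = 2 \<and> card {i\<in>{5..n}. \<sigma> i = i} \<noteq> 1}
               \<union> {p1324, p1423, c1324, c1423}"

end

theory Submission
  imports Defs "HOL-Real_Asymp.Real_Asymp"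
begin

fun gg :: "nat \<Rightarrow> nat \<Rightarrow> int" where
  "gg s 0 = fact s"
| "gg s (Suc k) = gg s k - gg (s - 1) k"

definition DS :: "nat set \<Rightarrow> nat set \<Rightarrow> (nat \<Rightarrow> nat) set" where
  "DS S T = {\<sigma>. \<sigma> permutes S \<and> (\<forall>i\<in>T. \<sigma> i \<noteq> i)}"

lemma permutes_remove:
  assumes "t \<in> S" shows "(\<sigma> permutes S \<and> \<sigma> t = t) \<longleftrightarrow> \<sigma> permutes (S - {t})"
proof
  assume "\<sigma> permutes S \<and> \<sigma> t = t" thus "\<sigma> permutes (S - {t})"
    using permutes_superset[of \<sigma> S "S - {t}"] by auto
next
  assume a: "\<sigma> permutes (S - {t})"
  hence "\<sigma> permutes S" by (rule permutes_subset) auto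
  moreover have "\<sigma> t = t" using a by (simp add: permutes_not_in)
  ultimately show "\<sigma> permutes S \<and> \<sigma> t = t" by simp
qed

lemma card_DS:
  assumes "finite T" "T \<subseteq> S" "finite S"
  shows "int (card (DS S T)) = gg (card S) (card T)"
  using assms
proof (induction T arbitrary: S rule: finite_induct)
  case empty
  then show ?case by (simp add: DS_def card_permutations)
next
  case (insert t T)
  have tS: "t \<in> S" using insert by auto
  have sub: "DS (S - {t}) T \<subseteq> DS S T"
    unfolding DS_def using permutes_subset by auto
  have eq: "DS S (insert t T) = DS S T - DS (S - {t}) T"
    unfolding DS_def using permutes_remove[OF tS] by auto
  have fin: "finite (DS S T)" unfolding DS_def
    using finite_permutations[OF insert(5)] by (rule rev_finite_subset) auto
  have "int (card (DS S (insert t T))) = int (card (DS S T)) - int (card (DS (S - {t}) T))"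
    unfolding eq using card_Diff_subset[OF rev_finite_subset[OF fin sub] sub] card_mono[OF fin sub]
    by simp
  also have "\<dots> = gg (card S) (card T) - gg (card (S - {t})) (card T)"
    using insert.IH[of S] insert.IH[of "S - {t}"] insert.prems insert.hyps by auto
  finally show ?case using insert tS by (simp add: card_Diff_singleton)
qed

lemma gg_closed: "gg s k = (\<Sum>j\<le>k. (-1)^j * of_nat (k choose j) * fact (s - j))"
proof (induction k arbitrary: s)
  case 0 then show ?case by simp
next
  case (Suc k)
  define h where "h j = (-1::int)^j * of_nat (k choose j) * fact (s - j)" for j
  define q where "q j = (-1::int)^j * of_nat (k choose j) * fact (s - 1 - j)" for j
  have hk: "h (Suc k) = 0" by (simp add: h_def)
  have "(\<Sum>j\<le>k. h j) = (\<Sum>j\<le>Suc k. h j)" using hk by (simp only: sum.atMost_Suc)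
  also have "\<dots> = h 0 + (\<Sum>j\<le>k. h (Suc j))" by (rule sum.atMost_Suc_shift)
  finally have A: "(\<Sum>j\<le>k. h j) = h 0 + (\<Sum>j\<le>k. h (Suc j))" .
  define r where "r j = (-1::int)^j * of_nat (Suc k choose j) * fact (s - j)" for j
  have r0: "r 0 = h 0" by (simp add: r_def h_def)
  have rS: "r (Suc j) = h (Suc j) - q j" for j
  proof -
    have "r (Suc j) = (-1)^(Suc j) * (of_nat (k choose j) + of_nat (k choose Suc j)) * fact (s - Suc j)"
      unfolding r_def by simp
    also have "\<dots> = h (Suc j) - q j" unfolding h_def q_def
      by (simp add: algebra_simps)
    finally show ?thesis .
  qed
  have "(\<Sum>j\<le>Suc k. r j) = r 0 + (\<Sum>j\<le>k. r (Suc j))" by (rule sum.atMost_Suc_shift)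
  also have "\<dots> = h 0 + (\<Sum>j\<le>k. h (Suc j)) - (\<Sum>j\<le>k. q j)"
    unfolding r0 rS sum_subtractf by simp
  also have "\<dots> = (\<Sum>j\<le>k. h j) - (\<Sum>j\<le>k. q j)" using A by simp
  also have "\<dots> = gg s k - gg (s - 1) k"
    unfolding Suc.IH[of s] Suc.IH[of "s - 1"] h_def q_def by simp
  finally show ?case unfolding r_def by simp
qed

lemma der_gg: "int (derangements_num m) = gg m m"
proof -
  have "derangements_num m = card (DS {1..m} {1..m})"
    unfolding derangements_num_def DS_def by simp
  thus ?thesis using card_DS[of "{1..m}" "{1..m}"] by simp
qed

lemma der_real: "real (derangements_num m) / fact m = (\<Sum>j\<le>m. (-1)^j / fact j)"
proof -
  have "real (derangements_num m) = real_of_int (gg m m)" using der_gg[of m]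
    by (metis of_int_of_nat_eq)
  also have "\<dots> = (\<Sum>j\<le>m. (-1)^j * (real (m choose j) * fact (m - j)))"
    unfolding gg_closed by (simp add: mult.assoc)
  also have "\<dots> = (\<Sum>j\<le>m. (-1)^j * (fact m / fact j))"
    by (intro sum.cong refl) (simp add: binomial_fact)
  also have "\<dots> = fact m * (\<Sum>j\<le>m. (-1)^j / fact j)"
    unfolding sum_distrib_left by (rule sum.cong) auto
  finally show ?thesis by simp
qed

lemma der_lim: "(\<lambda>m. real (derangements_num m) / fact m) \<longlonglongrightarrow> exp (-1)"
proof -
  have "(\<lambda>n. \<Sum>i<n. (-1::real)^i /\<^sub>R fact i) \<longlonglongrightarrow> exp (-1)"
    using exp_converges[of "-1::real"] unfolding sums_def .
  hence "(\<lambda>n. \<Sum>i<Suc n. (-1::real)^i /\<^sub>R fact i) \<longlonglongrightarrow> exp (-1)"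
    by (rule LIMSEQ_Suc)
  thus ?thesis unfolding der_real lessThan_Suc_atMost
    by (simp add: real_scaleR_def divide_inverse mult.commute)
qed

lemma gg_shift: "gg (Suc (Suc k)) k = gg (Suc (Suc k)) (Suc (Suc k)) + 2 * gg (Suc k) (Suc k) + gg k k"
  by simp



lemma sym_fix12:
  assumes "n \<ge> 2"
  shows "(\<sigma> \<in> Sym n \<and> \<sigma> 1 = 1 \<and> \<sigma> 2 = 2) \<longleftrightarrow> \<sigma> permutes {3..n}"
proof -
  have e1: "{1..n} - {1} = {2..n}" by auto
  have e2: "{2..n} - {2} = {3..n}" by auto
  have "(\<sigma> \<in> Sym n \<and> \<sigma> 1 = 1 \<and> \<sigma> 2 = 2) \<longleftrightarrow> (\<sigma> permutes {2..n} \<and> \<sigma> 2 = 2)"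
    unfolding Sym_def using permutes_remove[of 1 "{1..n}" \<sigma>] assms e1 by auto
  also have "\<dots> \<longleftrightarrow> \<sigma> permutes {3..n}"
    using permutes_remove[of 2 "{2..n}" \<sigma>] assms e2 by auto
  finally show ?thesis .
qed

definition AA :: "nat \<Rightarrow> (nat \<Rightarrow> nat) set" where
  "AA n = {\<sigma>\<in>Sym n. \<sigma> 1 = 1 \<and> \<sigma> 2 = 2 \<and> card {i\<in>{5..n}. \<sigma> i = i} \<noteq> 1}"

lemma card_AA:
  assumes n: "n \<ge> 6"
  shows "int (card (AA n)) = fact (n - 2) - int (n - 4) * gg (n - 3) (n - 5)"
proof -
  define P where "P = {\<sigma>. \<sigma> permutes {3..n}}"
  define B where "B = {\<sigma>\<in>P. card {i\<in>{5..n}. \<sigma> i = i} = 1}"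
  define E where "E i = DS ({3..n} - {i}) ({5..n} - {i})" for i
  have finP: "finite P" unfolding P_def by (rule finite_permutations) simp
  have cP: "card P = fact (n - 2)" unfolding P_def by (rule card_permutations) auto
  have AAeq: "AA n = P - B"
  proof -
    have "\<sigma> \<in> AA n \<longleftrightarrow> \<sigma> \<in> P - B" for \<sigma>
    proof -
      have "\<sigma> \<in> AA n \<longleftrightarrow> (\<sigma> \<in> Sym n \<and> \<sigma> 1 = 1 \<and> \<sigma> 2 = 2) \<and> card {i\<in>{5..n}. \<sigma> i = i} \<noteq> 1"
        unfolding AA_def by blast
      also have "\<dots> \<longleftrightarrow> \<sigma> permutes {3..n} \<and> card {i\<in>{5..n}. \<sigma> i = i} \<noteq> 1"
        using sym_fix12[of n \<sigma>] n by simp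
      also have "\<dots> \<longleftrightarrow> \<sigma> \<in> P - B" unfolding P_def B_def by blast
      finally show ?thesis .
    qed
    thus ?thesis by blast
  qed
  have BsubP: "B \<subseteq> P" unfolding B_def by auto
  have Beq: "B = (\<Union>i\<in>{5..n}. E i)"
  proof (intro equalityI subsetI)
    fix \<sigma> assume "\<sigma> \<in> B"
    then have pP: "\<sigma> permutes {3..n}" and c: "card {i\<in>{5..n}. \<sigma> i = i} = 1"
      unfolding B_def P_def by auto
    from c obtain i where i: "{x\<in>{5..n}. \<sigma> x = x} = {i}" by (metis card_1_singleton_iff One_nat_def)
    have i5: "i \<in> {5..n}" using i by blast
    have fi: "\<sigma> i = i" using i by blast
    have nf: "\<forall>j\<in>{5..n} - {i}. \<sigma> j \<noteq> j" using i by blast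
    have "\<sigma> permutes {3..n} - {i}" using permutes_remove[of i "{3..n}" \<sigma>] pP fi i5 by simp
    hence "\<sigma> \<in> E i" unfolding E_def DS_def using nf by simp
    thus "\<sigma> \<in> (\<Union>i\<in>{5..n}. E i)" using i5 by blast
  next
    fix \<sigma> assume "\<sigma> \<in> (\<Union>i\<in>{5..n}. E i)"
    then obtain i where i5: "i \<in> {5..n}" and s: "\<sigma> \<in> E i" by blast
    have pr: "\<sigma> permutes {3..n} - {i}" and nf: "\<forall>j\<in>{5..n} - {i}. \<sigma> j \<noteq> j"
      using s unfolding E_def DS_def by auto
    have i3: "i \<in> {3..n}" using i5 by simp
    have pp: "\<sigma> permutes {3..n}" and fi: "\<sigma> i = i"
      using permutes_remove[OF i3, of \<sigma>] pr by auto
    have "{x\<in>{5..n}. \<sigma> x = x} = {i}" using nf i5 fi by blast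
    hence "card {x\<in>{5..n}. \<sigma> x = x} = 1" by simp
    thus "\<sigma> \<in> B" unfolding B_def P_def using pp by simp
  qed
  have finE: "finite (E i)" for i unfolding E_def DS_def
    by (rule rev_finite_subset[OF finite_permutations[of "{3..n} - {i}"]]) auto
  have disj: "E i \<inter> E j = {}" if "i \<in> {5..n}" "j \<in> {5..n}" "i \<noteq> j" for i j
  proof (rule ccontr)
    assume "E i \<inter> E j \<noteq> {}"
    then obtain \<sigma> where a: "\<sigma> \<in> E i" "\<sigma> \<in> E j" by auto
    have "\<sigma> permutes {3..n} - {i}" using a(1) unfolding E_def DS_def by simp
    hence "\<sigma> i = i" by (rule permutes_not_in) simp
    moreover have "i \<in> {5..n} - {j}" using that by auto
    ultimately show False using a(2) unfolding E_def DS_def by auto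
  qed
  have cE: "int (card (E i)) = gg (n - 3) (n - 5)" if "i \<in> {5..n}" for i
  proof -
    have "int (card (E i)) = gg (card ({3..n} - {i})) (card ({5..n} - {i}))"
      unfolding E_def by (rule card_DS) auto
    thus ?thesis using that by (simp add: card_Diff_singleton)
  qed
  have "card B = (\<Sum>i\<in>{5..n}. card (E i))"
    unfolding Beq by (rule card_UN_disjoint) (use finE disj in auto)
  hence "int (card B) = (\<Sum>i\<in>{5..n}. int (card (E i)))" by simp
  also have "\<dots> = (\<Sum>i\<in>{5..n}. gg (n - 3) (n - 5))" by (rule sum.cong) (use cE in auto)
  also have "\<dots> = int (n - 4) * gg (n - 3) (n - 5)" using n by simp
  finally have cB: "int (card B) = int (n - 4) * gg (n - 3) (n - 5)" .
  have "card (AA n) = card P - card B" unfolding AAeq by (rule card_Diff_subset) (use finP BsubP rev_finite_subset in auto)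
  moreover have "card B \<le> card P" by (rule card_mono[OF finP BsubP])
  ultimately show ?thesis using cP cB by (simp add: of_nat_diff)
qed


lemma pF:
  assumes "p \<in> {p1324, p1423, c1324, c1423}"
  shows "p 1 \<in> {3,4} \<and> p 2 \<in> {3,4} \<and> p 3 \<in> {1,2} \<and> p 4 \<in> {1,2} \<and> (\<forall>i. i \<ge> 5 \<longrightarrow> p i = i)"
  using assms by (auto simp: p1324_def p1423_def c1324_def c1423_def)

lemma p_transp:
  "p1324 = Transposition.transpose 1 3 \<circ> Transposition.transpose 2 4"
  "p1423 = Transposition.transpose 1 4 \<circ> Transposition.transpose 2 3"
  "c1324 = Transposition.transpose 1 4 \<circ> Transposition.transpose 1 2 \<circ> Transposition.transpose 1 3"
  "c1423 = Transposition.transpose 1 3 \<circ> Transposition.transpose 1 2 \<circ> Transposition.transpose 1 4"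
  by (auto simp: fun_eq_iff p1324_def p1423_def c1324_def c1423_def transpose_def)

lemma pF_sym:
  assumes "p \<in> {p1324, p1423, c1324, c1423}" "n \<ge> 4"
  shows "p \<in> Sym n"
proof -
  have t: "Transposition.transpose a b permutes {1..n}" if "a \<in> {1..4}" "b \<in> {1..4}" for a b :: nat
    by (rule permutes_swap_id) (use that assms(2) in auto)
  have "p permutes {1..n}"
    using assms unfolding p_transp
    by (auto intro!: permutes_compose permutes_swap_id)
  then show ?thesis unfolding Sym_def by simp
qed

lemma neq_at: "f x \<noteq> g x \<Longrightarrow> f \<noteq> g" by auto

lemma F_card: "card {p1324, p1423, c1324, c1423} = 4"
proof -
  note v = p1324_def p1423_def c1324_def c1423_def
  have d1: "p1324 \<noteq> p1423" by (rule neq_at[of _ 1]) (simp add: v)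
  have d2: "p1324 \<noteq> c1324" by (rule neq_at[of _ 3]) (simp add: v)
  have d3: "p1324 \<noteq> c1423" by (rule neq_at[of _ 1]) (simp add: v)
  have d4: "p1423 \<noteq> c1324" by (rule neq_at[of _ 1]) (simp add: v)
  have d5: "p1423 \<noteq> c1423" by (rule neq_at[of _ 3]) (simp add: v)
  have d6: "c1324 \<noteq> c1423" by (rule neq_at[of _ 1]) (simp add: v)
  note d = d1 d2 d3 d4 d5 d6
  show ?thesis using d by simp
qed

lemma agree_sym: "agree_count n \<sigma> \<tau> = agree_count n \<tau> \<sigma>"
proof -
  have "{i\<in>{1..n}. \<sigma> i = \<tau> i} = {i\<in>{1..n}. \<tau> i = \<sigma> i}" by auto
  thus ?thesis unfolding agree_count_def by simp
qed

lemma agree_two: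
  assumes "a \<in> {1..n}" "b \<in> {1..n}" "a \<noteq> b" "\<sigma> a = \<tau> a" "\<sigma> b = \<tau> b"
  shows "agree_count n \<sigma> \<tau> \<noteq> 1"
proof -
  have "{a, b} \<subseteq> {i\<in>{1..n}. \<sigma> i = \<tau> i}" using assms by auto
  hence "card {a, b} \<le> card {i\<in>{1..n}. \<sigma> i = \<tau> i}" by (rule card_mono[rotated]) simp
  thus ?thesis unfolding agree_count_def using assms(3) by simp
qed

lemma AA_F_agree:
  assumes n: "n \<ge> 6" and s: "\<sigma> \<in> AA n" and p: "p \<in> {p1324, p1423, c1324, c1423}"
  shows "agree_count n \<sigma> p \<noteq> 1"
proof -
  have sp: "\<sigma> permutes {1..n}" and s1: "\<sigma> 1 = 1" and s2: "\<sigma> 2 = 2"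
    and c: "card {i\<in>{5..n}. \<sigma> i = i} \<noteq> 1" using s unfolding AA_def Sym_def by auto
  have inj: "inj \<sigma>" using sp by (rule permutes_inj)
  have s3: "\<sigma> 3 \<noteq> 1" "\<sigma> 3 \<noteq> 2" "\<sigma> 4 \<noteq> 1" "\<sigma> 4 \<noteq> 2"
    using inj_eq[OF inj, of 3 1] inj_eq[OF inj, of 3 2] inj_eq[OF inj, of 4 1] inj_eq[OF inj, of 4 2] s1 s2 by auto
  have P: "p 1 \<in> {3,4}" "p 2 \<in> {3,4}" "p 3 \<in> {1,2}" "p 4 \<in> {1,2}" "\<And>i. i \<ge> 5 \<Longrightarrow> p i = i"
    using pF[OF p] by auto
  have "{i\<in>{1..n}. \<sigma> i = p i} = {i\<in>{5..n}. \<sigma> i = i}"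
  proof (intro equalityI subsetI)
    fix i assume i: "i \<in> {i\<in>{1..n}. \<sigma> i = p i}"
    have "i \<noteq> 1" using i s1 P(1) by auto
    moreover have "i \<noteq> 2" using i s2 P(2) by auto
    moreover have "i \<noteq> 3" using i s3 P(3) by auto
    moreover have "i \<noteq> 4" using i s3 P(4) by auto
    ultimately have "i \<ge> 5" using i by auto
    thus "i \<in> {i\<in>{5..n}. \<sigma> i = i}" using i P(5) by auto
  next
    fix i assume "i \<in> {i\<in>{5..n}. \<sigma> i = i}"
    thus "i \<in> {i\<in>{1..n}. \<sigma> i = p i}" using P(5) by auto
  qed
  thus ?thesis unfolding agree_count_def using c by simp
qed

lemma familyB_eq: "familyB n = AA n \<union> {p1324, p1423, c1324, c1423}"
  unfolding familyB_def AA_def ..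

lemma no_sing:
  assumes n: "n \<ge> 6" shows "no_singleton_intersection n (familyB n)"
  unfolding no_singleton_intersection_def familyB_eq
proof (intro ballI)
  fix \<sigma> \<tau> assume s: "\<sigma> \<in> AA n \<union> {p1324, p1423, c1324, c1423}" and t: "\<tau> \<in> AA n \<union> {p1324, p1423, c1324, c1423}"
  show "agree_count n \<sigma> \<tau> \<noteq> 1"
  proof (cases "\<sigma> \<in> AA n")
    case sA: True
    show ?thesis
    proof (cases "\<tau> \<in> AA n")
      case True
      then show ?thesis using sA n by (intro agree_two[of 1 n 2]) (auto simp: AA_def)
    next
      case False
      then show ?thesis using t AA_F_agree[OF n sA] by auto
    qed
  next
    case sF: False
    hence sF': "\<sigma> \<in> {p1324, p1423, c1324, c1423}" using s by auto
    show ?thesis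
    proof (cases "\<tau> \<in> AA n")
      case True
      then show ?thesis using AA_F_agree[OF n True sF'] agree_sym by metis
    next
      case False
      hence "\<tau> \<in> {p1324, p1423, c1324, c1423}" using t by auto
      then show ?thesis using sF' n pF[of \<sigma>] pF[of \<tau>] by (intro agree_two[of 5 n 6]) auto
    qed
  qed
qed

lemma card_fam:
  assumes n: "n \<ge> 6"
  shows "card (familyB n) = card (AA n) + 4"
proof -
  have fin: "finite (AA n)" unfolding AA_def Sym_def
    by (rule rev_finite_subset[OF finite_permutations[of "{1..n}"]]) auto
  have disj: "AA n \<inter> {p1324, p1423, c1324, c1423} = {}"
  proof (rule ccontr)
    assume "AA n \<inter> {p1324, p1423, c1324, c1423} \<noteq> {}"
    then obtain p where p: "p \<in> AA n" "p \<in> {p1324, p1423, c1324, c1423}" by blast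
    have "p 1 = 1" using p(1) unfolding AA_def by simp
    moreover have "p 1 \<in> {3,4}" using pF[OF p(2)] by simp
    ultimately show False by simp
  qed
  show ?thesis unfolding familyB_eq
    using card_Un_disjoint[OF fin _ disj] F_card by simp
qed

lemma count_fam:
  assumes n: "n \<ge> 6"
  shows "int (card (familyB n)) =
              int (fact (n - 2))
              - int (n - 4) * int (derangements_num (n - 3) + 2 * derangements_num (n - 4)
                                    + derangements_num (n - 5)) + 4"
proof -
  define k where "k = n - 5"
  have k: "n = k + 5" using n unfolding k_def by simp
  have e1: "n - 3 = Suc (Suc k)" "n - 4 = Suc k" "n - 5 = k" using k by auto
  have "gg (n - 3) (n - 5) = int (derangements_num (n - 3) + 2 * derangements_num (n - 4)
                                    + derangements_num (n - 5))"
    unfolding e1 gg_shift by (simp add: der_gg)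
  thus ?thesis using card_AA[OF n] card_fam[OF n] by simp
qed

lemma id_AA: assumes n: "n \<ge> 6" shows "id \<in> AA n"
proof -
  have "{i\<in>{5..n}. id i = i} = {5..n}" by auto
  hence "card {i\<in>{5..n}. id i = i} = n - 4" by simp
  thus ?thesis unfolding AA_def Sym_def using n by (simp add: permutes_id)
qed

lemma not_coset:
  assumes n: "n \<ge> 6"
  shows "\<not> (\<exists>C. is_two_coset n C \<and> familyB n \<subseteq> C)"
proof
  assume "\<exists>C. is_two_coset n C \<and> familyB n \<subseteq> C"
  then obtain i j k l where ik: "i \<in> {1..n}" "k \<in> {1..n}" "i \<noteq> k"
    and sub: "familyB n \<subseteq> two_coset n i j k l"
    unfolding is_two_coset_def by blast
  have mem: "\<sigma> i = j \<and> \<sigma> k = l" if "\<sigma> \<in> familyB n" for \<sigma>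
    using sub that unfolding two_coset_def by blast
  have "id i = j \<and> id k = l" using mem id_AA[OF n] unfolding familyB_eq by blast
  hence jl: "j = i" "l = k" by auto
  have "p1324 i = i \<and> p1324 k = k" using mem[of p1324] jl unfolding familyB_eq by blast
  hence i5: "i \<ge> 5" and k5: "k \<ge> 5"
    using ik by (auto simp: p1324_def split: if_splits)
  have "\<exists>\<sigma>\<in>AA n. \<sigma> i \<noteq> i"
  proof (cases "n = 6")
    case True
    define \<sigma> where "\<sigma> = Transposition.transpose i k"
    have "\<sigma> permutes {1..n}" unfolding \<sigma>_def by (rule permutes_swap_id) (use ik in auto)
    moreover have "\<sigma> 1 = 1" "\<sigma> 2 = 2" using i5 k5 unfolding \<sigma>_def by (auto simp: Transposition.transpose_def)
    moreover have "card {x\<in>{5..n}. \<sigma> x = x} \<noteq> 1"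
    proof -
      have "{x\<in>{5..n}. \<sigma> x = x} = {}"
        using True ik i5 k5 unfolding \<sigma>_def by (auto simp: Transposition.transpose_def)
      thus ?thesis by (subst \<open>{x\<in>{5..n}. \<sigma> x = x} = {}\<close>) simp
    qed
    moreover have "\<sigma> i \<noteq> i" using ik unfolding \<sigma>_def by simp
    ultimately have "\<sigma> \<in> AA n \<and> \<sigma> i \<noteq> i" unfolding AA_def Sym_def by blast
    thus ?thesis by blast
  next
    case False
    define \<sigma> where "\<sigma> = Transposition.transpose i 3"
    have "\<sigma> permutes {1..n}" unfolding \<sigma>_def by (rule permutes_swap_id) (use ik n in auto)
    moreover have "\<sigma> 1 = 1" "\<sigma> 2 = 2" using i5 unfolding \<sigma>_def by (auto simp: Transposition.transpose_def)
    moreover have "card {x\<in>{5..n}. \<sigma> x = x} \<noteq> 1"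
    proof -
      have e: "{x\<in>{5..n}. \<sigma> x = x} = {5..n} - {i}"
        using i5 unfolding \<sigma>_def by (auto simp: Transposition.transpose_def)
      have "card ({5..n} - {i}) = n - 5" using ik i5 by (simp add: card_Diff_singleton)
      thus ?thesis unfolding e using False n by simp
    qed
    moreover have "\<sigma> i \<noteq> i" using i5 unfolding \<sigma>_def by simp
    ultimately have "\<sigma> \<in> AA n \<and> \<sigma> i \<noteq> i" unfolding AA_def Sym_def by blast
    thus ?thesis by blast
  qed
  then obtain \<sigma> where "\<sigma> \<in> AA n" "\<sigma> i \<noteq> i" by blast
  thus False using mem[of \<sigma>] jl unfolding familyB_eq by blast
qed

lemma alg0:
  fixes a b c F D0 D1 D2 :: real
  assumes "a > 0" "b > 0" "c > 0" "F > 0"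
  shows "(c*b*a*F - a*(D2+2*D1+D0) + 4)/(c*b*a*F)
    = 1 - (a/c * (D2/(b*a*F)) + 2*(a/(c*b)) * (D1/(a*F))
         + 1/(c*b) * (D0/F)) + 4*(1/(c*b*a*F))"
  using assms by (simp add: field_simps)

lemma alg:
  fixes x F D0 D1 D2 :: real
  assumes "x \<ge> 0" "F > 0"
  shows "((x+3)*(x+2)*(x+1)*F - (x+1)*(D2+2*D1+D0) + 4)/((x+3)*(x+2)*(x+1)*F)
    = 1 - ((x+1)/(x+3) * (D2/((x+2)*(x+1)*F)) + 2*((x+1)/((x+3)*(x+2))) * (D1/((x+1)*F))
         + 1/((x+3)*(x+2)) * (D0/F)) + 4*(1/((x+3)*(x+2)*(x+1)*F))"
  by (rule alg0) (use assms in auto)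

lemma lim_fam: "(\<lambda>n. real (card (familyB n)) / fact (n - 2)) \<longlonglongrightarrow> 1 - exp (-1)"
proof -
  define a where "a m = real (derangements_num m) / fact m" for m
  have a0: "a \<longlonglongrightarrow> exp (-1)" unfolding a_def by (rule der_lim)
  have a1: "(\<lambda>m. a (m + 1)) \<longlonglongrightarrow> exp (-1)" by (rule LIMSEQ_ignore_initial_segment[OF a0])
  have a2: "(\<lambda>m. a (m + 2)) \<longlonglongrightarrow> exp (-1)" by (rule LIMSEQ_ignore_initial_segment[OF a0])
  have r1: "(\<lambda>m::nat. (real m + 1) / (real m + 3)) \<longlonglongrightarrow> 1" by real_asymp
  have r2: "(\<lambda>m::nat. (real m + 1) / ((real m + 3) * (real m + 2))) \<longlonglongrightarrow> 0" by real_asymp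
  have r3: "(\<lambda>m::nat. 1 / ((real m + 3) * (real m + 2))) \<longlonglongrightarrow> 0" by real_asymp
  have "(\<lambda>n. (1::real) ^ n /\<^sub>R fact n) \<longlonglongrightarrow> 0"
    by (rule summable_LIMSEQ_zero[OF sums_summable[OF exp_converges]])
  hence "(\<lambda>n. 1 / (fact n :: real)) \<longlonglongrightarrow> 0" by (simp add: divide_inverse)
  hence f0: "(\<lambda>m. 1 / (fact (m + 3) :: real)) \<longlonglongrightarrow> 0" by (rule LIMSEQ_ignore_initial_segment)
  define G where "G m = 1 - ((real m + 1) / (real m + 3) * a (m + 2)
      + 2 * ((real m + 1) / ((real m + 3) * (real m + 2))) * a (m + 1)
      + 1 / ((real m + 3) * (real m + 2)) * a m) + 4 * (1 / fact (m + 3))" for m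
  have "G \<longlonglongrightarrow> 1 - (1 * exp (-1) + 2 * 0 * exp (-1) + 0 * exp (-1)) + 4 * 0"
    unfolding G_def by (intro tendsto_intros r1 r2 r3 a0 a1 a2 f0)
  hence G: "G \<longlonglongrightarrow> 1 - exp (-1)" by simp
  have eq: "real (card (familyB (m + 5))) / fact (m + 5 - 2) = G m" if m1: "m \<ge> 1" for m
  proof -
    have c: "int (card (familyB (m + 5))) = int (fact (m + 3)) - int (m + 1) *
       int (derangements_num (m + 2) + 2 * derangements_num (m + 1) + derangements_num m) + 4"
      using count_fam[of "m + 5"] m1 by (simp add: numeral_eq_Suc)
    have c': "real (card (familyB (m + 5))) = fact (m + 3) - (real m + 1) *
       (real (derangements_num (m + 2)) + 2 * real (derangements_num (m + 1)) + real (derangements_num m)) + 4"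
    proof -
      have "real (card (familyB (m + 5))) = real_of_int (int (card (familyB (m + 5))))" by simp
      also have "\<dots> = fact (m + 3) - (real m + 1) *
       (real (derangements_num (m + 2)) + 2 * real (derangements_num (m + 1)) + real (derangements_num m)) + 4"
        unfolding c by simp
      finally show ?thesis .
    qed
    have f3: "(fact (m + 3) :: real) = (real m + 3) * (real m + 2) * (real m + 1) * fact m"
      by (simp add: numeral_eq_Suc algebra_simps)
    have f2: "(fact (m + 2) :: real) = (real m + 2) * (real m + 1) * fact m"
      by (simp add: numeral_eq_Suc algebra_simps)
    have f1: "(fact (m + 1) :: real) = (real m + 1) * fact m"
      by (simp add: algebra_simps)
    have fm: "(fact m :: real) > 0" by simp
    have m2: "m + 5 - 2 = m + 3" by simp
    show ?thesis unfolding m2 c' G_def a_def f3 f2 f1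
      by (rule alg) (use fm in simp_all)
  qed
  have G1: "(\<lambda>m. G (m + 1)) \<longlonglongrightarrow> 1 - exp (-1)" by (rule LIMSEQ_ignore_initial_segment[OF G])
  have "real (card (familyB (m + 6))) / fact (m + 6 - 2) = G (m + 1)" for m
    using eq[of "m + 1"] by (simp add: add.assoc add.commute)
  hence "(\<lambda>m. real (card (familyB (m + 6))) / fact (m + 6 - 2)) \<longlonglongrightarrow> 1 - exp (-1)"
    using G1 by simp
  thus ?thesis by (rule LIMSEQ_offset)
qed

theorem mainTheorem14:
  shows "(\<forall>n\<ge>6.
            no_singleton_intersection n (familyB n) \<and>
            \<not> (\<exists>C. is_two_coset n C \<and> familyB n \<subseteq> C) \<and>
            int (card (familyB n)) =
              int (fact (n - 2))
              - int (n - 4) * int (derangements_num (n - 3) + 2 * derangements_num (n - 4)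
                                    + derangements_num (n - 5)) + 4)
         \<and> ((\<lambda>n. real (card (familyB n)) / fact (n - 2)) \<longlonglongrightarrow> 1 - exp (-1))"
  using no_sing not_coset count_fam lim_fam by blast

end
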